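(* Let $(X,d)$ be an infinite compact metric space and $f_{1,\infty}=\{f_n\}_{n\ge1}$ a sequence of maps $X\to X$ each of which is an isometry. Then $(X,f_{1,\infty})$ does not satisfy Banks's condition.
   Context: Write $f_1^n=f_n\circ\cdots\circ f_1$. $(X,f_{1,\infty})$ satisfies Banks's condition if for any three non-empty open sets $U,V,W\subseteq X$ there is $n\in\mathbb{N}$ with $f_1^n(U)\cap V\neq\emptyset$ and $f_1^n(U)\cap W\ne\emptyset$. *)

theory Defs
  imports "HOL-Analysis.Analysis"
begin

fun seq_comp :: "(nat \<Rightarrow> 'a \<Rightarrow> 'a) \<Rightarrow> nat \<Rightarrow> 'a \<Rightarrow> 'a" where
  "seq_comp f 0 = id"
| "seq_comp f (Suc n) = f (Suc n) \<circ> seq_comp f n"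

definition banks_condition :: "'a::metric_space set \<Rightarrow> (nat \<Rightarrow> 'a \<Rightarrow> 'a) \<Rightarrow> bool" where
  "banks_condition X f \<longleftrightarrow>
     (\<forall>U V W. openin (top_of_set X) U \<and> U \<noteq> {} \<and>
              openin (top_of_set X) V \<and> V \<noteq> {} \<and>
              openin (top_of_set X) W \<and> W \<noteq> {} \<longrightarrow>
        (\<exists>n\<ge>1. seq_comp f n ` U \<inter> V \<noteq> {} \<and> seq_comp f n ` U \<inter> W \<noteq> {}))"

end

theory Submission
  imports Defs
begin

lemma seq_comp_props:
  assumes "\<And>n. n \<ge> 1 \<Longrightarrow> f n ` X \<subseteq> X"
    and "\<And>n x y. n \<ge> 1 \<Longrightarrow> x \<in> X \<Longrightarrow> y \<in> X \<Longrightarrow> dist (f n x) (f n y) = dist x y"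
  shows "seq_comp f n ` X \<subseteq> X \<and> (\<forall>x\<in>X. \<forall>y\<in>X. dist (seq_comp f n x) (seq_comp f n y) = dist x y)"
proof (induction n)
  case 0
  then show ?case by simp
next
  case (Suc n)
  have s: "f (Suc n) ` X \<subseteq> X" using assms(1)[of "Suc n"] by simp
  show ?case
  proof
    show "seq_comp f (Suc n) ` X \<subseteq> X" using Suc s by auto
    show "\<forall>x\<in>X. \<forall>y\<in>X. dist (seq_comp f (Suc n) x) (seq_comp f (Suc n) y) = dist x y"
      using Suc assms(2)[of "Suc n"] by (simp add: image_subset_iff)
  qed
qed

theorem lemma4p5:
  fixes X :: "'a::metric_space set" and f :: "nat \<Rightarrow> 'a \<Rightarrow> 'a"
  assumes "compact X" and "infinite X"
    and "\<And>n. n \<ge> 1 \<Longrightarrow> f n ` X \<subseteq> X"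
    and "\<And>n x y. n \<ge> 1 \<Longrightarrow> x \<in> X \<Longrightarrow> y \<in> X \<Longrightarrow> dist (f n x) (f n y) = dist x y"
  shows "\<not> banks_condition X f"
proof
  assume B: "banks_condition X f"
  obtain a b where ab: "a \<in> X" "b \<in> X" "a \<noteq> b"
    using assms(2) by (metis finite.simps insertCI subsetI finite_subset)
  define e where "e = dist a b / 4"
  have e: "e > 0" using ab by (simp add: e_def)
  let ?U = "ball a e \<inter> X" and ?W = "ball b e \<inter> X"
  have o1: "openin (top_of_set X) ?U" "openin (top_of_set X) ?W"
    by (simp_all add: openin_open_Int[OF open_ball] Int_commute)
  have n1: "?U \<noteq> {}" "?W \<noteq> {}" using ab e by (metis IntI centre_in_ball empty_iff)+
  from B o1 n1 obtain n where "seq_comp f n ` ?U \<inter> ?U \<noteq> {}" "seq_comp f n ` ?U \<inter> ?W \<noteq> {}"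
    unfolding banks_condition_def by blast
  then obtain u v where u: "u \<in> ?U" "seq_comp f n u \<in> ?U" and v: "v \<in> ?U" "seq_comp f n v \<in> ?W"
    by blast
  have iso: "\<forall>x\<in>X. \<forall>y\<in>X. dist (seq_comp f n x) (seq_comp f n y) = dist x y"
    using seq_comp_props[of f X n] assms(3,4) by blast
  have "dist (seq_comp f n u) (seq_comp f n v) = dist u v" using iso u v by auto
  also have "\<dots> \<le> dist u a + dist a v" by (rule dist_triangle)
  also have "\<dots> < 2 * e" using u v by (simp add: dist_commute)
  finally have d1: "dist (seq_comp f n u) (seq_comp f n v) < 2 * e" .
  have "dist a b \<le> dist a (seq_comp f n u) + dist (seq_comp f n u) (seq_comp f n v) + dist (seq_comp f n v) b"
    by (metis add.commute add_le_cancel_left dist_triangle order_trans)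
  also have "\<dots> < 4 * e" using u v d1 by (simp add: dist_commute)
  finally show False by (simp add: e_def)
qed

end
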